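(* Let $\mathcal{R}$ be a ring and let $(\mathcal{C}^{\bullet},\partial)$ be a bigraded cochain complex of $\mathcal{R}$-modules as described in the context. Then there are three commutative diagrams with exact rows and exact columns. The first has rows \[ 0\to B^{3}(\mathcal{C},\partial)\cap\mathcal{C}^{3,0}\hookrightarrow B^{3}(\mathcal{C},\partial)\xrightarrow{\pi_{1}}\mathcal{B}^{3}_{1}\to0,\quad 0\to Z^{3}(\mathcal{N}_{0},\overline{\partial})\hookrightarrow Z^{3}(\mathcal{C},\partial)\xrightarrow{\pi_{1}}\ker(\rho_{3})\to0, \] \[ 0\to\frac{Z^{3}(\mathcal{N}_{0},\overline{\partial})}{B^{3}(\mathcal{C},\partial)\cap\mathcal{C}^{3,0}}\to H^{3}(\mathcal{C},\partial)\to\frac{\ker(\rho_{3})}{\mathcal{B}^{3}_{1}}\to0; \] the second has rows \[ 0\to\mathcal{B}^{3}_{1}\cap\mathcal{C}^{2,1}\hookrightarrow\mathcal{B}^{3}_{1}\xrightarrow{\pi_{2}}\mathcal{B}^{3}_{2}\to0,\quad 0\to\ker(\varrho_{3})\hookrightarrow\ker(\rho_{3})\xrightarrow{\pi_{2}}\mathcal{Z}^{3}_{2}\to0, \] \[ 0\to\frac{\ker(\varrho_{3})}{\mathcal{B}^{3}_{1}\cap\mathcal{C}^{2,1}}\to\frac{\ker(\rho_{3})}{\mathcal{B}^{3}_{1}}\to\frac{\mathcal{Z}^{3}_{2}}{\mathcal{B}^{3}_{2}}\to0; \] and the third has rows \[ 0\to\mathcal{B}^{3}_{2}\cap\mathcal{C}^{1,2}\hookrightarrow\mathcal{B}^{3}_{2}\xrightarrow{\pi_{3}}B^{3}(\mathcal{C}^{0,\bullet},\partial_{0,1})\to0,\quad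 0\to\mathcal{Z}^{3}_{2}\cap\mathcal{C}^{1,2}\hookrightarrow\mathcal{Z}^{3}_{2}\xrightarrow{\pi_{3}}\mathcal{Z}^{3}_{3}\to0, \] \[ 0\to\frac{\mathcal{Z}^{3}_{2}\cap\mathcal{C}^{1,2}}{\mathcal{B}^{3}_{2}\cap\mathcal{C}^{1,2}}\to\frac{\mathcal{Z}^{3}_{2}}{\mathcal{B}^{3}_{2}}\to\frac{\mathcal{Z}^{3}_{3}}{B^{3}(\mathcal{C}^{0,\bullet},\partial_{0,1})}\to0. \] In each diagram the first two rows are listed first (top row, then middle row), the vertical maps from the top to the middle row are inclusions, those from the middle to the bottom row are the canonical quotient projections, and the maps of the bottom row are induced by those of the middle row.
   Context: Setting: $\mathcal{C}^{\bullet}=\bigoplus_{k}\mathcal{C}^{k}$ is a graded $\mathcal{R}$-module with compatible bigrading $\mathcal{C}^{k}=\bigoplus_{p+q=k}\mathcal{C}^{p,q}$, $\mathcal{C}^{p,q}=\{0\}$ if $p<0$ or $q<0$; $\partial$ is $\mathcal{R}$-linear of degree $1$, $\partial^{2}=0$, and $\partial=\partial_{2,-1}+\partial_{1,0}+\partial_{0,1}$ with $\partial_{i,j}(\mathcal{C}^{p,q})\subseteq\mathcal{C}^{p+i,q+j}$. For $\eta\in\mathcal{C}^{k}$, $\eta_{p,q}$ is its $\mathcal{C}^{p,q}$-component. $G^{q}\mathcal{C}:=\bigoplus_{j\geq q}\mathcal{C}^{i,j}$ and $\pi_{q}:\mathcal{C}\to G^{q}\mathcal{C}$ is the projection along the bigrading.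 $Z,B,H$ denote cocycles, coboundaries, cohomology; $(\mathcal{C}^{0,\bullet},\partial_{0,1})$ is a cochain complex. Let $\mathcal{N}^{p,q}:=\ker(\partial_{0,1}|_{\mathcal{C}^{p,q}})\cap\ker(\partial_{2,-1}|_{\mathcal{C}^{p,q}})$ and, for $q\ge0$, $\mathcal{N}_{q}:=\bigoplus_{p}\mathcal{N}^{p-q,q}$ (degree-$m$ part $\mathcal{N}^{m-q,q}$); each $\mathcal{N}_{q}$ is a subcomplex of $(\mathcal{C},\partial)$, with differential $\overline{\partial}:=\partial|_{\mathcal{N}_q}=\partial_{1,0}|_{\mathcal{N}_q}$. Let $\mathcal{M}^{k}:=\{\eta\in\mathcal{C}^{k}\mid(\partial\eta)_{i,j}\in B^{k+1}(\mathcal{N}_{j},\overline{\partial})\ \text{for all } i+j=k+1\}$, $\mathcal{Z}^{k}_{q}:=\{\pi_{q}(\eta)\mid\eta\in\mathcal{M}^{k},\ \pi_{q}(\partial\eta)=0\}$ and $\mathcal{B}^{k}_{q}:=\pi_{q}(B^{k}(\mathcal{C},\partial))$. Let $\mathcal{A}^{k}:=\{\pi_{1}(\eta)\mid\eta\in\mathcal{C}^{k},\ \pi_{1}(\partial\eta)=0\}$ and $\mathcal{J}^{k}:=\mathcal{A}^{k}\cap\mathcal{C}^{k-1,1}$. For $\xi\in\mathcal{A}^{k}$ and any $\eta\in\mathcal{C}^{k}$ with $\pi_{1}\eta=\xi$, $\pi_{1}(\partial\eta)=0$, the element $\partial_{2,-1}\xi_{k-1,1}+\partial_{1,0}\eta_{k,0}$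 is a $(k+1)$-cocycle of $(\mathcal{N}_{0},\overline{\partial})$ whose class depends only on $\xi$; this defines the linear map $\rho_{k}:\mathcal{A}^{k}\to H^{k+1}(\mathcal{N}_{0},\overline{\partial})$, $\rho_{k}(\xi):=[\partial_{2,-1}\xi_{k-1,1}+\partial_{1,0}\eta_{k,0}]$, and $\varrho_{k}:=\rho_{k}|_{\mathcal{J}^{k}}$. *)

theory Defs
  imports Main "HOL-Library.Function_Algebras"
begin

text \<open>An element of the total module is
  represented as a family eta with eta p q in C^{p,q} (a subgroup of an ambient
  abelian group 'm); the differential is given by its three components
  d21 p q : C^{p,q} -> C^{p+2,q-1} (used only for q >= 1),
  d10 p q : C^{p,q} -> C^{p+1,q},  d01 p q : C^{p,q} -> C^{p,q+1}.\<close>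

record 'm bgcx =
  Cc  :: "nat \<Rightarrow> nat \<Rightarrow> 'm set"
  d21 :: "nat \<Rightarrow> nat \<Rightarrow> 'm \<Rightarrow> 'm"
  d10 :: "nat \<Rightarrow> nat \<Rightarrow> 'm \<Rightarrow> 'm"
  d01 :: "nat \<Rightarrow> nat \<Rightarrow> 'm \<Rightarrow> 'm"

type_synonym 'm bgel = "nat \<Rightarrow> nat \<Rightarrow> 'm"

definition deg :: "('m::zero) bgcx \<Rightarrow> nat \<Rightarrow> 'm bgel set" where
  "deg X k = {\<eta>. (\<forall>p q. \<eta> p q \<in> Cc X p q) \<and> (\<forall>p q. p + q \<noteq> k \<longrightarrow> \<eta> p q = 0)}"

definition bideg :: "('m::zero) bgcx \<Rightarrow> nat \<Rightarrow> nat \<Rightarrow> 'm bgel set" where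
  "bideg X p q = {\<eta> \<in> deg X (p + q). \<forall>p' q'. (p', q') \<noteq> (p, q) \<longrightarrow> \<eta> p' q' = 0}"

definition D21 :: "('m::zero) bgcx \<Rightarrow> 'm bgel \<Rightarrow> 'm bgel" where
  "D21 X \<eta> = (\<lambda>p q. if 2 \<le> p then d21 X (p - 2) (q + 1) (\<eta> (p - 2) (q + 1)) else 0)"

definition D10 :: "('m::zero) bgcx \<Rightarrow> 'm bgel \<Rightarrow> 'm bgel" where
  "D10 X \<eta> = (\<lambda>p q. if 1 \<le> p then d10 X (p - 1) q (\<eta> (p - 1) q) else 0)"

definition D01 :: "('m::zero) bgcx \<Rightarrow> 'm bgel \<Rightarrow> 'm bgel" where
  "D01 X \<eta> = (\<lambda>p q. if 1 \<le> q then d01 X p (q - 1) (\<eta> p (q - 1)) else 0)"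

definition dd :: "('m::ab_group_add) bgcx \<Rightarrow> 'm bgel \<Rightarrow> 'm bgel" where
  "dd X \<eta> = D21 X \<eta> + D10 X \<eta> + D01 X \<eta>"

definition smv :: "('r \<Rightarrow> 'm \<Rightarrow> 'm) \<Rightarrow> 'r \<Rightarrow> 'm bgel \<Rightarrow> 'm bgel" where
  "smv sm r \<eta> = (\<lambda>p q. sm r (\<eta> p q))"

definition bigraded_complex ::
  "('r::ring_1 \<Rightarrow> 'm::ab_group_add \<Rightarrow> 'm) \<Rightarrow> 'm bgcx \<Rightarrow> bool" where
  "bigraded_complex sm X \<longleftrightarrow>
     (\<forall>p q. 0 \<in> Cc X p q
        \<and> (\<forall>x\<in>Cc X p q. \<forall>y\<in>Cc X p q. x + y \<in> Cc X p q)
        \<and> (\<forall>x\<in>Cc X p q. - x \<in> Cc X p q)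
        \<and> (\<forall>r. \<forall>x\<in>Cc X p q. sm r x \<in> Cc X p q)
        \<and> (\<forall>r. \<forall>x\<in>Cc X p q. \<forall>y\<in>Cc X p q. sm r (x + y) = sm r x + sm r y)
        \<and> (\<forall>r s. \<forall>x\<in>Cc X p q. sm (r + s) x = sm r x + sm s x)
        \<and> (\<forall>r s. \<forall>x\<in>Cc X p q. sm (r * s) x = sm r (sm s x))
        \<and> (\<forall>x\<in>Cc X p q. sm 1 x = x))
   \<and> (\<forall>p q. (\<forall>x\<in>Cc X p (Suc q). d21 X p (Suc q) x \<in> Cc X (p + 2) q)
        \<and> (\<forall>x\<in>Cc X p (Suc q). \<forall>y\<in>Cc X p (Suc q).
              d21 X p (Suc q) (x + y) = d21 X p (Suc q) x + d21 X p (Suc q) y)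
        \<and> (\<forall>r. \<forall>x\<in>Cc X p (Suc q). d21 X p (Suc q) (sm r x) = sm r (d21 X p (Suc q) x)))
   \<and> (\<forall>p q. (\<forall>x\<in>Cc X p q. d10 X p q x \<in> Cc X (p + 1) q)
        \<and> (\<forall>x\<in>Cc X p q. \<forall>y\<in>Cc X p q. d10 X p q (x + y) = d10 X p q x + d10 X p q y)
        \<and> (\<forall>r. \<forall>x\<in>Cc X p q. d10 X p q (sm r x) = sm r (d10 X p q x)))
   \<and> (\<forall>p q. (\<forall>x\<in>Cc X p q. d01 X p q x \<in> Cc X p (q + 1))
        \<and> (\<forall>x\<in>Cc X p q. \<forall>y\<in>Cc X p q. d01 X p q (x + y) = d01 X p q x + d01 X p q y)
        \<and> (\<forall>r. \<forall>x\<in>Cc X p q. d01 X p q (sm r x) = sm r (d01 X p q x)))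
   \<and> (\<forall>k. \<forall>\<eta>\<in>deg X k. dd X (dd X \<eta>) = 0)"

definition cocycles :: "('m::ab_group_add) bgcx \<Rightarrow> nat \<Rightarrow> 'm bgel set" where
  "cocycles X k = {\<eta> \<in> deg X k. dd X \<eta> = 0}"

definition coboundaries :: "('m::ab_group_add) bgcx \<Rightarrow> nat \<Rightarrow> 'm bgel set" where
  "coboundaries X k = {dd X \<eta> |\<eta> j. Suc j = k \<and> \<eta> \<in> deg X j}"

definition Nbi :: "('m::zero) bgcx \<Rightarrow> nat \<Rightarrow> nat \<Rightarrow> 'm bgel set" where
  "Nbi X p q = {\<eta> \<in> bideg X p q. D01 X \<eta> = 0 \<and> D21 X \<eta> = 0}"

definition Ndeg :: "('m::zero) bgcx \<Rightarrow> nat \<Rightarrow> nat \<Rightarrow> 'm bgel set" where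
  "Ndeg X q m = (if q \<le> m then Nbi X (m - q) q else {0})"

definition ZN :: "('m::ab_group_add) bgcx \<Rightarrow> nat \<Rightarrow> nat \<Rightarrow> 'm bgel set" where
  "ZN X q k = {\<eta> \<in> Ndeg X q k. dd X \<eta> = 0}"

definition BN :: "('m::ab_group_add) bgcx \<Rightarrow> nat \<Rightarrow> nat \<Rightarrow> 'm bgel set" where
  "BN X q k = {dd X \<eta> |\<eta> j. Suc j = k \<and> \<eta> \<in> Ndeg X q j}"

definition comp :: "('m::zero) bgel \<Rightarrow> nat \<Rightarrow> nat \<Rightarrow> 'm bgel" where
  "comp \<eta> i j = (\<lambda>p q. if p = i \<and> q = j then \<eta> i j else 0)"

definition proj :: "nat \<Rightarrow> ('m::zero) bgel \<Rightarrow> 'm bgel" where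
  "proj q \<eta> = (\<lambda>p q'. if q \<le> q' then \<eta> p q' else 0)"

definition Mset :: "('m::ab_group_add) bgcx \<Rightarrow> nat \<Rightarrow> 'm bgel set" where
  "Mset X k = {\<eta> \<in> deg X k. \<forall>i j. i + j = Suc k \<longrightarrow> comp (dd X \<eta>) i j \<in> BN X j (Suc k)}"

definition Zcal :: "('m::ab_group_add) bgcx \<Rightarrow> nat \<Rightarrow> nat \<Rightarrow> 'm bgel set" where
  "Zcal X k q = {proj q \<eta> |\<eta>. \<eta> \<in> Mset X k \<and> proj q (dd X \<eta>) = 0}"

definition Bcal :: "('m::ab_group_add) bgcx \<Rightarrow> nat \<Rightarrow> nat \<Rightarrow> 'm bgel set" where
  "Bcal X k q = proj q ` coboundaries X k"

definition Aset :: "('m::ab_group_add) bgcx \<Rightarrow> nat \<Rightarrow> 'm bgel set" where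
  "Aset X k = {proj 1 \<eta> |\<eta>. \<eta> \<in> deg X k \<and> proj 1 (dd X \<eta>) = 0}"

definition Jset :: "('m::ab_group_add) bgcx \<Rightarrow> nat \<Rightarrow> 'm bgel set" where
  "Jset X k = Aset X k \<inter> bideg X (k - 1) 1"

text \<open>Cosets and quotients; an element of S/T is the coset x + T, the zero of S/T is T.\<close>
definition coset :: "'a::plus \<Rightarrow> 'a set \<Rightarrow> 'a set" where
  "coset x T = (\<lambda>t. x + t) ` T"

definition quot :: "'a::plus set \<Rightarrow> 'a set \<Rightarrow> 'a set set" where
  "quot S T = (\<lambda>x. coset x T) ` S"

text \<open>\<rho>_k: the class in H^{k+1}(N_0) = Z^{k+1}(N_0)/B^{k+1}(N_0) of
  \<partial>_{2,-1} xi_{k-1,1} + \<partial>_{1,0} eta_{k,0} for a chosen lift eta of xi.\<close>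
definition rho_rep :: "('m::ab_group_add) bgcx \<Rightarrow> nat \<Rightarrow> 'm bgel \<Rightarrow> 'm bgel" where
  "rho_rep X k \<xi> =
     (let \<eta> = (SOME \<eta>. \<eta> \<in> deg X k \<and> proj 1 \<eta> = \<xi> \<and> proj 1 (dd X \<eta>) = 0)
      in D21 X (comp \<xi> (k - 1) 1) + D10 X (comp \<eta> k 0))"

definition rho :: "('m::ab_group_add) bgcx \<Rightarrow> nat \<Rightarrow> 'm bgel \<Rightarrow> 'm bgel set" where
  "rho X k \<xi> = coset (rho_rep X k \<xi>) (BN X 0 (Suc k))"

definition ker_rho :: "('m::ab_group_add) bgcx \<Rightarrow> nat \<Rightarrow> 'm bgel set" where
  "ker_rho X k = {\<xi> \<in> Aset X k. rho X k \<xi> = BN X 0 (Suc k)}"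

definition ker_varrho :: "('m::ab_group_add) bgcx \<Rightarrow> nat \<Rightarrow> 'm bgel set" where
  "ker_varrho X k = {\<xi> \<in> Jset X k. rho X k \<xi> = BN X 0 (Suc k)}"

text \<open>B^k(C^{0,\<bullet>}, \<partial>_{0,1}) (for k \<ge> 1), inside the total module.\<close>
definition B0col :: "('m::ab_group_add) bgcx \<Rightarrow> nat \<Rightarrow> 'm bgel set" where
  "B0col X k = {D01 X \<eta> |\<eta>. \<eta> \<in> bideg X 0 (k - 1)}"

definition is_submod :: "('r \<Rightarrow> 'm \<Rightarrow> 'm) \<Rightarrow> ('m::ab_group_add) bgel set \<Rightarrow> bool" where
  "is_submod sm S \<longleftrightarrow> 0 \<in> S \<and> (\<forall>x\<in>S. \<forall>y\<in>S. x + y \<in> S) \<and> (\<forall>x\<in>S. - x \<in> S)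
     \<and> (\<forall>r. \<forall>x\<in>S. smv sm r x \<in> S)"

definition linmap :: "('r \<Rightarrow> 'm \<Rightarrow> 'm) \<Rightarrow> ('m::ab_group_add bgel \<Rightarrow> 'm bgel) \<Rightarrow> 'm bgel set \<Rightarrow> bool" where
  "linmap sm f S \<longleftrightarrow> (\<forall>x\<in>S. \<forall>y\<in>S. f (x + y) = f x + f y)
     \<and> (\<forall>r. \<forall>x\<in>S. f (smv sm r x) = smv sm r (f x))"

text \<open>Short exact sequence 0 -> A -f-> B -g-> C -> 0 (z is the zero of C).\<close>
definition ses :: "'x set \<Rightarrow> 'y set \<Rightarrow> 'z set \<Rightarrow> 'z \<Rightarrow> ('x \<Rightarrow> 'y) \<Rightarrow> ('y \<Rightarrow> 'z) \<Rightarrow> bool" where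
  "ses A B C z f g \<longleftrightarrow> f ` A \<subseteq> B \<and> inj_on f A \<and> g ` B = C \<and> {b \<in> B. g b = z} = f ` A"

text \<open>Map S/T -> S'/T' induced by f (evaluated on a representative).\<close>
definition qmap :: "('a \<Rightarrow> 'b::plus) \<Rightarrow> 'b set \<Rightarrow> 'a set \<Rightarrow> 'b set" where
  "qmap f T X = coset (f (SOME x. x \<in> X)) T"

text \<open>A 3x3 commutative diagram
     0 -> T1 -> T2 -> T3 -> 0        (maps f, g restricted)
     0 -> M1 -> M2 -> M3 -> 0        (maps f, g)
     0 -> M1/T1 -> M2/T2 -> M3/T3 -> 0   (induced maps)
  with inclusions T_i -> M_i and quotient maps M_i -> M_i/T_i as columns,
  all rows and columns exact.\<close>
definition diagram ::
  "('r \<Rightarrow> 'm \<Rightarrow> 'm) \<Rightarrow> ('m::ab_group_add) bgel set \<Rightarrow> 'm bgel set \<Rightarrow> 'm bgel set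
   \<Rightarrow> 'm bgel set \<Rightarrow> 'm bgel set \<Rightarrow> 'm bgel set
   \<Rightarrow> ('m bgel \<Rightarrow> 'm bgel) \<Rightarrow> ('m bgel \<Rightarrow> 'm bgel) \<Rightarrow> bool" where
  "diagram sm T1 T2 T3 M1 M2 M3 f g \<longleftrightarrow>
     (\<forall>S\<in>{T1, T2, T3, M1, M2, M3}. is_submod sm S)
   \<and> T1 \<subseteq> M1 \<and> T2 \<subseteq> M2 \<and> T3 \<subseteq> M3
   \<and> linmap sm f M1 \<and> linmap sm g M2
   \<and> ses T1 T2 T3 0 f g
   \<and> ses M1 M2 M3 0 f g
   \<and> ses (quot M1 T1) (quot M2 T2) (quot M3 T3) T3 (qmap f T2) (qmap g T3)
   \<and> (\<forall>x\<in>M1. qmap f T2 (coset x T1) = coset (f x) T2)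
   \<and> (\<forall>y\<in>M2. qmap g T3 (coset y T2) = coset (g y) T3)
   \<and> ses T1 M1 (quot M1 T1) T1 id (\<lambda>x. coset x T1)
   \<and> ses T2 M2 (quot M2 T2) T2 id (\<lambda>x. coset x T2)
   \<and> ses T3 M3 (quot M3 T3) T3 id (\<lambda>x. coset x T3)"

end

theory Submission
  imports Defs
begin


definition subgrp :: "'a::ab_group_add set \<Rightarrow> bool" where
  "subgrp S \<longleftrightarrow> 0 \<in> S \<and> (\<forall>x\<in>S. \<forall>y\<in>S. x + y \<in> S) \<and> (\<forall>x\<in>S. - x \<in> S)"

lemma submod_subgrp: "is_submod sm S \<Longrightarrow> subgrp S"
  by (simp add: is_submod_def subgrp_def)

lemma subgrp_diff: "subgrp S \<Longrightarrow> x \<in> S \<Longrightarrow> y \<in> S \<Longrightarrow> x - y \<in> S"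
  unfolding subgrp_def by (metis diff_conv_add_uminus)

lemma coset_eq:
  assumes "subgrp T" shows "coset x T = coset y T \<longleftrightarrow> x - y \<in> T"
proof
  assume h: "coset x T = coset y T"
  have "y \<in> coset y T" using assms unfolding coset_def subgrp_def by force
  then obtain t where "t \<in> T" "y = x + t" using h unfolding coset_def by auto
  then have "x - y = - t" by simp
  then show "x - y \<in> T" using \<open>t \<in> T\<close> assms unfolding subgrp_def by simp
next
  assume h: "x - y \<in> T"
  show "coset x T = coset y T"
  proof
    show "coset x T \<subseteq> coset y T"
    proof
      fix z assume "z \<in> coset x T"
      then obtain t where t: "t \<in> T" "z = x + t" unfolding coset_def by auto
      have "(x - y) + t \<in> T" using h t assms unfolding subgrp_def by simp
      moreover have "z = y + ((x - y) + t)" using t by simp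
      ultimately show "z \<in> coset y T" unfolding coset_def by blast
    qed
  next
    show "coset y T \<subseteq> coset x T"
    proof
      fix z assume "z \<in> coset y T"
      then obtain t where t: "t \<in> T" "z = y + t" unfolding coset_def by auto
      have "t - (x - y) \<in> T" using h t assms subgrp_diff by blast
      moreover have "z = x + (t - (x - y))" using t by simp
      ultimately show "z \<in> coset x T" unfolding coset_def by blast
    qed
  qed
qed

lemma coset_zero: "coset (0::'a::monoid_add) T = T"
  unfolding coset_def by (simp add: image_def)

lemma coset_self: "subgrp T \<Longrightarrow> coset x T = T \<longleftrightarrow> x \<in> T"
  using coset_eq[of T x 0] by (simp add: coset_zero)

lemma some_coset:
  assumes "subgrp T" obtains t where "t \<in> T" "(SOME z. z \<in> coset x T) = x + t"
proof -
  have "x \<in> coset x T" using assms unfolding coset_def subgrp_def by force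
  then have "(SOME z. z \<in> coset x T) \<in> coset x T" by (rule someI)
  then show ?thesis using that unfolding coset_def by auto
qed

lemma qmap_id:
  assumes "subgrp T1" "subgrp T2" "T1 \<subseteq> T2"
  shows "qmap id T2 (coset x T1) = coset x T2"
proof -
  obtain t where t: "t \<in> T1" "(SOME z. z \<in> coset x T1) = x + t" using some_coset assms(1) by blast
  have "coset (x + t) T2 = coset x T2" using coset_eq[OF assms(2)] t assms(3) by auto
  then show ?thesis unfolding qmap_def using t by simp
qed

lemma qmap_g:
  assumes "subgrp T2" "subgrp T3" "T2 \<subseteq> M2" "y \<in> M2"
    "\<forall>x\<in>M2. \<forall>y\<in>M2. g (x + y) = g x + g y" "g ` T2 \<subseteq> T3"
  shows "qmap g T3 (coset y T2) = coset (g y) T3"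
proof -
  obtain t where t: "t \<in> T2" "(SOME z. z \<in> coset y T2) = y + t" using some_coset assms(1) by blast
  have "g (y + t) = g y + g t" using assms t by auto
  moreover have "g t \<in> T3" using assms t by auto
  ultimately have "coset (g (y + t)) T3 = coset (g y) T3" using coset_eq[OF assms(2)] by simp
  then show ?thesis unfolding qmap_def using t by simp
qed

lemma col_ses:
  assumes "subgrp T" "T \<subseteq> M"
  shows "ses T M (quot M T) T id (\<lambda>x. coset x T)"
  unfolding ses_def quot_def using assms coset_self[OF assms(1)] by auto

lemma diagram_intro:
  assumes sub: "is_submod sm T1" "is_submod sm T2" "is_submod sm T3"
     "is_submod sm M1" "is_submod sm M2" "is_submod sm M3"
  and inc: "T1 \<subseteq> M1" "T2 \<subseteq> M2" "T3 \<subseteq> M3" "M1 \<subseteq> M2"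
  and lin: "linmap sm g M2"
  and gM: "g ` M2 = M3" "{b\<in>M2. g b = 0} = M1"
  and gT: "g ` T2 = T3" "{b\<in>T2. g b = 0} = T1"
  shows "diagram sm T1 T2 T3 M1 M2 M3 id g"
proof -
  note sg = sub[THEN submod_subgrp]
  have T12: "T1 \<subseteq> T2" using gT by auto
  have addg: "\<forall>x\<in>M2. \<forall>y\<in>M2. g (x + y) = g x + g y" using lin unfolding linmap_def by blast
  have g0: "g 0 = 0"
  proof -
    have "0 \<in> M2" using sg(5) unfolding subgrp_def by blast
    then have "g (0 + 0) = g 0 + g 0" using addg by blast
    then show ?thesis by simp
  qed
  have gdiff: "g (x - y) = g x - g y" if "x \<in> M2" "y \<in> M2" for x y
  proof -
    have "x - y \<in> M2" using subgrp_diff[OF sg(5)] that by blast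
    then have "g (x - y + y) = g (x - y) + g y" using addg that by blast
    then show ?thesis by (simp add: algebra_simps)
  qed
  have linid: "linmap sm id M1" unfolding linmap_def by simp
  have qf: "\<forall>x\<in>M1. qmap id T2 (coset x T1) = coset (id x) T2"
    using qmap_id[OF sg(1) sg(2) T12] by simp
  have qg: "\<forall>y\<in>M2. qmap g T3 (coset y T2) = coset (g y) T3"
    using qmap_g[OF sg(2) sg(3) inc(2) _ addg] gT by auto
  have ses1: "ses T1 T2 T3 0 id g" unfolding ses_def using gT T12 by auto
  have ses2: "ses M1 M2 M3 0 id g" unfolding ses_def using gM inc by auto
  have ses3: "ses (quot M1 T1) (quot M2 T2) (quot M3 T3) T3 (qmap id T2) (qmap g T3)"
    unfolding ses_def
  proof (intro conjI)
    show "qmap id T2 ` quot M1 T1 \<subseteq> quot M2 T2"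
      unfolding quot_def using qf inc by auto
    show "inj_on (qmap id T2) (quot M1 T1)"
    proof (rule inj_onI)
      fix a b assume a: "a \<in> quot M1 T1" and b: "b \<in> quot M1 T1" and e: "qmap id T2 a = qmap id T2 b"
      obtain x where x: "x \<in> M1" "a = coset x T1" using a unfolding quot_def by auto
      obtain y where y: "y \<in> M1" "b = coset y T1" using b unfolding quot_def by auto
      have "coset x T2 = coset y T2" using e x y qf by simp
      then have "x - y \<in> T2" using coset_eq[OF sg(2)] by simp
      moreover have "x - y \<in> M1" using subgrp_diff[OF sg(4)] x y by blast
      ultimately have "x - y \<in> T1" using gM(2) gT(2) by blast
      then show "a = b" using x y coset_eq[OF sg(1)] by simp
    qed
    show "qmap g T3 ` quot M2 T2 = quot M3 T3"
    proof -
      have "qmap g T3 ` quot M2 T2 = (\<lambda>y. coset (g y) T3) ` M2"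
        unfolding quot_def image_image using qg by (auto intro: image_eqI)
      also have "\<dots> = quot M3 T3" unfolding quot_def using gM(1) by auto
      finally show ?thesis .
    qed
    show "{b \<in> quot M2 T2. qmap g T3 b = T3} = qmap id T2 ` quot M1 T1"
    proof
      show "{b \<in> quot M2 T2. qmap g T3 b = T3} \<subseteq> qmap id T2 ` quot M1 T1"
      proof
        fix b assume "b \<in> {b \<in> quot M2 T2. qmap g T3 b = T3}"
        then obtain y where y: "y \<in> M2" "b = coset y T2" "qmap g T3 b = T3" unfolding quot_def by auto
        have "g y \<in> T3" using y qg coset_self[OF sg(3)] by simp
        then obtain t where t: "t \<in> T2" "g t = g y" using gT(1) by auto
        have "y - t \<in> M2" using subgrp_diff[OF sg(5)] y t inc by blast
        moreover have "g (y - t) = 0" using gdiff y t inc by auto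
        ultimately have ym: "y - t \<in> M1" using gM(2) by blast
        have "coset (y - t) T2 = coset y T2" using coset_eq[OF sg(2)] t sg(2) unfolding subgrp_def by simp
        then have "b = qmap id T2 (coset (y - t) T1)" using qf ym y by simp
        moreover have "coset (y - t) T1 \<in> quot M1 T1" using ym unfolding quot_def by blast
        ultimately show "b \<in> qmap id T2 ` quot M1 T1" by blast
      qed
      show "qmap id T2 ` quot M1 T1 \<subseteq> {b \<in> quot M2 T2. qmap g T3 b = T3}"
      proof
        fix b assume "b \<in> qmap id T2 ` quot M1 T1"
        then obtain x where x: "x \<in> M1" "b = coset x T2" using qf unfolding quot_def by auto
        have "x \<in> M2" "g x = 0" using x gM(2) by auto
        moreover have "0 \<in> T3" using sg(3) unfolding subgrp_def by blast
        ultimately show "b \<in> {b \<in> quot M2 T2. qmap g T3 b = T3}"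
          using x qg coset_self[OF sg(3)] unfolding quot_def by auto
      qed
    qed
  qed
  show ?thesis unfolding diagram_def
    using sub inc lin ses1 ses2 ses3 qf qg col_ses[OF sg(1) inc(1)] col_ses[OF sg(2) inc(2)]
      col_ses[OF sg(3) inc(3)] linid by simp
qed


definition wt :: "('m::zero) bgcx \<Rightarrow> 'm bgel \<Rightarrow> bool" where
  "wt X \<eta> \<longleftrightarrow> (\<forall>p q. \<eta> p q \<in> Cc X p q)"

lemma addhom:
  assumes "subgrp S" "\<forall>x\<in>S. \<forall>y\<in>S. f (x + y) = (f x + f y :: 'b::ab_group_add)"
  shows "f 0 = 0" "x \<in> S \<Longrightarrow> f (- x) = - f x" "x \<in> S \<Longrightarrow> y \<in> S \<Longrightarrow> f (x - y) = f x - f y"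
proof -
  have z: "(0::'a) \<in> S" using assms(1) unfolding subgrp_def by blast
  have "f (0 + 0) = f 0 + f 0" using assms(2) z by blast
  then show f0: "f 0 = 0" by simp
  have n: "f (- z) = - f z" if z: "z \<in> S" for z
  proof -
    have "- z \<in> S" using z assms(1) unfolding subgrp_def by blast
    then have "f (z + - z) = f z + f (- z)" using assms(2) z by blast
    then show "f (- z) = - f z" using f0 by (simp add: eq_neg_iff_add_eq_0 add.commute)
  qed
  then show "x \<in> S \<Longrightarrow> f (- x) = - f x" .
  { assume x: "x \<in> S" and y: "y \<in> S"
    have "- y \<in> S" using y assms(1) unfolding subgrp_def by blast
    then have "f (x + - y) = f x + f (- y)" using assms(2) x by blast
    then show "f (x - y) = f x - f y" using n[OF y] by simp }
qed

lemma submod_image: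
  assumes "is_submod sm S" "\<And>x y. x \<in> S \<Longrightarrow> y \<in> S \<Longrightarrow> f (x + y) = f x + f y"
    "\<And>r x. x \<in> S \<Longrightarrow> f (smv sm r x) = smv sm r (f x)"
  shows "is_submod sm (f ` S)"
proof -
  have a2: "\<forall>x\<in>S. \<forall>y\<in>S. f (x + y) = f x + f y" using assms(2) by blast
  note h = addhom[OF submod_subgrp[OF assms(1)] a2]
  have s: "0 \<in> S" "\<And>x y. x \<in> S \<Longrightarrow> y \<in> S \<Longrightarrow> x + y \<in> S" "\<And>x. x \<in> S \<Longrightarrow> - x \<in> S"
    "\<And>r x. x \<in> S \<Longrightarrow> smv sm r x \<in> S" using assms(1) unfolding is_submod_def by blast+
  show ?thesis unfolding is_submod_def
  proof (intro conjI ballI allI)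
    show "0 \<in> f ` S" using h(1) s(1) by (metis image_eqI)
    fix a b assume a: "a \<in> f ` S" and b: "b \<in> f ` S"
    then obtain x y where "x \<in> S" "y \<in> S" "a = f x" "b = f y" by blast
    then show "a + b \<in> f ` S" using assms(2) s(2) by (metis image_eqI)
  next
    fix a assume "a \<in> f ` S"
    then obtain x where x: "x \<in> S" "a = f x" by blast
    then show "- a \<in> f ` S" using h(2)[OF x(1)] s(3) by (metis image_eqI)
    fix r show "smv sm r a \<in> f ` S" using x assms(3) s(4) by (metis image_eqI)
  qed
qed

lemma submod_Int: "is_submod sm A \<Longrightarrow> is_submod sm B \<Longrightarrow> is_submod sm (A \<inter> B)"
  unfolding is_submod_def by auto

locale bgc =
  fixes sm :: "'r::ring_1 \<Rightarrow> 'm::ab_group_add \<Rightarrow> 'm" and X :: "'m bgcx"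
  assumes bc: "bigraded_complex sm X"
begin

lemmas bcU = bc[unfolded bigraded_complex_def]
lemmas bc1 = bcU[THEN conjunct1] and bc2 = bcU[THEN conjunct2, THEN conjunct1]
  and bc3 = bcU[THEN conjunct2, THEN conjunct2, THEN conjunct1]
  and bc4 = bcU[THEN conjunct2, THEN conjunct2, THEN conjunct2, THEN conjunct1]
  and bc5 = bcU[THEN conjunct2, THEN conjunct2, THEN conjunct2, THEN conjunct2]

lemma Cc0: "0 \<in> Cc X p q" and Cc_add: "x \<in> Cc X p q \<Longrightarrow> y \<in> Cc X p q \<Longrightarrow> x + y \<in> Cc X p q"
  and Cc_neg: "x \<in> Cc X p q \<Longrightarrow> - x \<in> Cc X p q" and Cc_sm: "x \<in> Cc X p q \<Longrightarrow> sm r x \<in> Cc X p q"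
  and sm_add: "x \<in> Cc X p q \<Longrightarrow> y \<in> Cc X p q \<Longrightarrow> sm r (x + y) = sm r x + sm r y"
  using bc1 by blast+

lemma Cc_sub: "subgrp (Cc X p q)"
  unfolding subgrp_def using Cc0 Cc_add Cc_neg by blast

lemma Cc_diff: "x \<in> Cc X p q \<Longrightarrow> y \<in> Cc X p q \<Longrightarrow> x - y \<in> Cc X p q"
  using subgrp_diff[OF Cc_sub] .

lemma sm0: "sm r 0 = 0"
proof -
  have "sm r (0 + 0) = sm r 0 + sm r 0" using sm_add[OF Cc0 Cc0] .
  then show ?thesis by simp
qed

lemma d21C: "x \<in> Cc X p (Suc q) \<Longrightarrow> d21 X p (Suc q) x \<in> Cc X (p + 2) q"
  and d21_add: "x \<in> Cc X p (Suc q) \<Longrightarrow> y \<in> Cc X p (Suc q) \<Longrightarrow> d21 X p (Suc q) (x + y) = d21 X p (Suc q) x + d21 X p (Suc q) y"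
  and d21_sm: "x \<in> Cc X p (Suc q) \<Longrightarrow> d21 X p (Suc q) (sm r x) = sm r (d21 X p (Suc q) x)"
  using bc2 by blast+
lemma d10C: "x \<in> Cc X p q \<Longrightarrow> d10 X p q x \<in> Cc X (p + 1) q"
  and d10_add: "x \<in> Cc X p q \<Longrightarrow> y \<in> Cc X p q \<Longrightarrow> d10 X p q (x + y) = d10 X p q x + d10 X p q y"
  and d10_sm: "x \<in> Cc X p q \<Longrightarrow> d10 X p q (sm r x) = sm r (d10 X p q x)"
  using bc3 by blast+
lemma d01C: "x \<in> Cc X p q \<Longrightarrow> d01 X p q x \<in> Cc X p (q + 1)"
  and d01_add: "x \<in> Cc X p q \<Longrightarrow> y \<in> Cc X p q \<Longrightarrow> d01 X p q (x + y) = d01 X p q x + d01 X p q y"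
  and d01_sm: "x \<in> Cc X p q \<Longrightarrow> d01 X p q (sm r x) = sm r (d01 X p q x)"
  using bc4 by blast+
lemma ddsq: "\<eta> \<in> deg X k \<Longrightarrow> dd X (dd X \<eta>) = 0"
  using bc5 by blast

lemma d21_0: "d21 X p (Suc q) 0 = 0" using addhom(1)[OF Cc_sub, where f="d21 X p (Suc q)"] d21_add by blast
lemma d10_0: "d10 X p q 0 = 0" using addhom(1)[OF Cc_sub, where f="d10 X p q"] d10_add by blast
lemma d01_0: "d01 X p q 0 = 0" using addhom(1)[OF Cc_sub, where f="d01 X p q"] d01_add by blast

lemma wt_0: "wt X 0" unfolding wt_def using Cc0 by simp
lemma wt_add: "wt X a \<Longrightarrow> wt X b \<Longrightarrow> wt X (a + b)" unfolding wt_def using Cc_add by simp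
lemma wt_neg: "wt X a \<Longrightarrow> wt X (- a)" unfolding wt_def using Cc_neg by simp
lemma wt_diff: "wt X a \<Longrightarrow> wt X b \<Longrightarrow> wt X (a - b)" unfolding wt_def using Cc_diff by simp
lemma wt_smv: "wt X a \<Longrightarrow> wt X (smv sm r a)" unfolding wt_def smv_def using Cc_sm by simp
lemma wt_proj: "wt X a \<Longrightarrow> wt X (proj q a)" unfolding wt_def proj_def using Cc0 by simp
lemma wt_comp: "wt X a \<Longrightarrow> wt X (comp a i j)" unfolding wt_def comp_def using Cc0 by simp

lemma wt_sub: "subgrp {a. wt X a}" unfolding subgrp_def using wt_0 wt_add wt_neg by blast

lemma wt_D21: assumes "wt X a" shows "wt X (D21 X a)"
  unfolding wt_def D21_def
proof (intro allI)
  fix p q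
  show "(if 2 \<le> p then d21 X (p - 2) (q + 1) (a (p - 2) (q + 1)) else 0) \<in> Cc X p q"
  proof (cases "2 \<le> p")
    case True
    have "d21 X (p - 2) (Suc q) (a (p - 2) (Suc q)) \<in> Cc X (p - 2 + 2) q"
      by (rule d21C) (use assms in \<open>simp add: wt_def\<close>)
    moreover have e: "p - 2 + 2 = p" using True by simp
    ultimately show ?thesis using True by (simp only: e if_True if_P[OF True] Suc_eq_plus1)
  qed (simp add: Cc0)
qed
lemma wt_D10: assumes "wt X a" shows "wt X (D10 X a)"
  unfolding wt_def D10_def
proof (intro allI)
  fix p q
  show "(if 1 \<le> p then d10 X (p - 1) q (a (p - 1) q) else 0) \<in> Cc X p q"
  proof (cases "1 \<le> p")
    case True
    have "d10 X (p - 1) q (a (p - 1) q) \<in> Cc X (p - 1 + 1) q"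
      by (rule d10C) (use assms in \<open>simp add: wt_def\<close>)
    then show ?thesis using True by simp
  qed (simp add: Cc0)
qed
lemma wt_D01: assumes "wt X a" shows "wt X (D01 X a)"
  unfolding wt_def D01_def
proof (intro allI)
  fix p q
  show "(if 1 \<le> q then d01 X p (q - 1) (a p (q - 1)) else 0) \<in> Cc X p q"
  proof (cases "1 \<le> q")
    case True
    have "d01 X p (q - 1) (a p (q - 1)) \<in> Cc X p (q - 1 + 1)"
      by (rule d01C) (use assms in \<open>simp add: wt_def\<close>)
    then show ?thesis using True by simp
  qed (simp add: Cc0)
qed
lemma wt_dd: "wt X a \<Longrightarrow> wt X (dd X a)"
  unfolding dd_def using wt_D21 wt_D10 wt_D01 wt_add by simp

lemma D21_add: "wt X a \<Longrightarrow> wt X b \<Longrightarrow> D21 X (a + b) = D21 X a + D21 X b"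
  unfolding wt_def D21_def by (intro ext) (simp add: d21_add)
lemma D10_add: "wt X a \<Longrightarrow> wt X b \<Longrightarrow> D10 X (a + b) = D10 X a + D10 X b"
  unfolding wt_def D10_def by (intro ext) (simp add: d10_add)
lemma D01_add: "wt X a \<Longrightarrow> wt X b \<Longrightarrow> D01 X (a + b) = D01 X a + D01 X b"
  unfolding wt_def D01_def by (intro ext) (simp add: d01_add)
lemma D21_smv: "wt X a \<Longrightarrow> D21 X (smv sm r a) = smv sm r (D21 X a)"
  unfolding wt_def D21_def smv_def by (intro ext) (simp add: d21_sm sm0)
lemma D10_smv: "wt X a \<Longrightarrow> D10 X (smv sm r a) = smv sm r (D10 X a)"
  unfolding wt_def D10_def smv_def by (intro ext) (simp add: d10_sm sm0)
lemma D01_smv: "wt X a \<Longrightarrow> D01 X (smv sm r a) = smv sm r (D01 X a)"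
  unfolding wt_def D01_def smv_def by (intro ext) (simp add: d01_sm sm0)

lemma dd_add: "wt X a \<Longrightarrow> wt X b \<Longrightarrow> dd X (a + b) = dd X a + dd X b"
  unfolding dd_def by (simp add: D21_add D10_add D01_add algebra_simps)

lemma smv_add: "wt X a \<Longrightarrow> wt X b \<Longrightarrow> smv sm r (a + b) = smv sm r a + smv sm r b"
proof (intro ext)
  fix p q assume "wt X a" "wt X b"
  then show "smv sm r (a + b) p q = (smv sm r a + smv sm r b) p q"
    using sm_add[of "a p q" p q "b p q" r] unfolding wt_def smv_def by simp
qed

lemma dd_smv: "wt X a \<Longrightarrow> dd X (smv sm r a) = smv sm r (dd X a)"
  unfolding dd_def by (simp add: D21_smv D10_smv D01_smv smv_add wt_D21 wt_D10 wt_D01 wt_add)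

lemma dd_0: "dd X 0 = 0" using addhom(1)[OF wt_sub, where f="dd X"] dd_add by (simp add: Ball_def)
lemma dd_diff: "wt X a \<Longrightarrow> wt X b \<Longrightarrow> dd X (a - b) = dd X a - dd X b"
  using addhom(3)[OF wt_sub, where f="dd X"] dd_add by (simp add: Ball_def)
lemma D01_diff: "wt X a \<Longrightarrow> wt X b \<Longrightarrow> D01 X (a - b) = D01 X a - D01 X b"
  using addhom(3)[OF wt_sub, where f="D01 X"] D01_add by (simp add: Ball_def)
lemma D21_diff: "wt X a \<Longrightarrow> wt X b \<Longrightarrow> D21 X (a - b) = D21 X a - D21 X b"
  using addhom(3)[OF wt_sub, where f="D21 X"] D21_add by (simp add: Ball_def)
lemma D01_0: "D01 X 0 = 0" using addhom(1)[OF wt_sub, where f="D01 X"] D01_add by (simp add: Ball_def)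
lemma D21_0: "D21 X 0 = 0" using addhom(1)[OF wt_sub, where f="D21 X"] D21_add by (simp add: Ball_def)

lemma dd_apply: "dd X a p q = (if 2 \<le> p then d21 X (p - 2) (Suc q) (a (p - 2) (Suc q)) else 0)
   + (if 1 \<le> p then d10 X (p - 1) q (a (p - 1) q) else 0)
   + (if 1 \<le> q then d01 X p (q - 1) (a p (q - 1)) else 0)"
  unfolding dd_def D21_def D10_def D01_def by simp

lemma deg_iff: "\<eta> \<in> deg X k \<longleftrightarrow> wt X \<eta> \<and> (\<forall>p q. p + q \<noteq> k \<longrightarrow> \<eta> p q = 0)"
  unfolding deg_def wt_def by simp

lemma deg_dd: "\<eta> \<in> deg X k \<Longrightarrow> dd X \<eta> \<in> deg X (Suc k)"
  unfolding deg_iff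
proof (intro conjI allI impI)
  assume h: "wt X \<eta> \<and> (\<forall>p q. p + q \<noteq> k \<longrightarrow> \<eta> p q = 0)"
  then show "wt X (dd X \<eta>)" using wt_dd by blast
  fix p q assume pq: "p + q \<noteq> Suc k"
  have z: "\<And>a b. a + b \<noteq> k \<Longrightarrow> \<eta> a b = 0" using h by blast
  have 1: "(if 2 \<le> p then d21 X (p - 2) (Suc q) (\<eta> (p - 2) (Suc q)) else 0) = 0"
  proof (cases "2 \<le> p")
    case True then have "\<eta> (p - 2) (Suc q) = 0" using z pq by simp
    then show ?thesis using d21_0 by simp
  qed simp
  have 2: "(if 1 \<le> p then d10 X (p - 1) q (\<eta> (p - 1) q) else 0) = 0"
  proof (cases "1 \<le> p")
    case True then have "\<eta> (p - 1) q = 0" using z pq by simp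
    then show ?thesis using d10_0 by simp
  qed simp
  have 3: "(if 1 \<le> q then d01 X p (q - 1) (\<eta> p (q - 1)) else 0) = 0"
  proof (cases "1 \<le> q")
    case True then have "\<eta> p (q - 1) = 0" using z pq by simp
    then show ?thesis using d01_0 by simp
  qed simp
  show "dd X \<eta> p q = 0" unfolding dd_apply 1 2 3 by simp
qed

lemma submod_deg: "is_submod sm (deg X k)"
  unfolding is_submod_def using wt_0 wt_add wt_neg wt_smv
  by (auto simp: deg_iff) (auto simp: smv_def sm0)

lemma smv_0: "smv sm r 0 = 0" unfolding smv_def by (simp add: sm0 zero_fun_def)

lemma submod_kernel:
  assumes "is_submod sm S" "\<And>x y. x \<in> S \<Longrightarrow> y \<in> S \<Longrightarrow> f (x + y) = f x + f y"
    "\<And>r x. x \<in> S \<Longrightarrow> f (smv sm r x) = smv sm r (f x)"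
  shows "is_submod sm {x \<in> S. f x = 0}"
proof -
  have a2: "\<forall>x\<in>S. \<forall>y\<in>S. f (x + y) = f x + f y" using assms(2) by blast
  note h = addhom[OF submod_subgrp[OF assms(1)] a2]
  have s: "0 \<in> S" "\<And>x y. x \<in> S \<Longrightarrow> y \<in> S \<Longrightarrow> x + y \<in> S" "\<And>x. x \<in> S \<Longrightarrow> - x \<in> S"
    "\<And>r x. x \<in> S \<Longrightarrow> smv sm r x \<in> S" using assms(1) unfolding is_submod_def by blast+
  show ?thesis unfolding is_submod_def
  proof (intro conjI ballI allI)
    show "0 \<in> {x \<in> S. f x = 0}" using h(1) s(1) by blast
    fix a b assume a: "a \<in> {x \<in> S. f x = 0}" and b: "b \<in> {x \<in> S. f x = 0}"
    then show "a + b \<in> {x \<in> S. f x = 0}" using assms(2) s(2) by simp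
  next
    fix a assume a: "a \<in> {x \<in> S. f x = 0}"
    then show "- a \<in> {x \<in> S. f x = 0}" unfolding mem_Collect_eq using h(2) s(3) by (metis minus_zero)
    fix r show "smv sm r a \<in> {x \<in> S. f x = 0}" using a assms(3) s(4) smv_0 by simp
  qed
qed

lemma deg_wt: "\<eta> \<in> deg X k \<Longrightarrow> wt X \<eta>" using deg_iff by blast

lemma submod_cocycles: "is_submod sm (cocycles X k)"
  unfolding cocycles_def
  by (rule submod_kernel[OF submod_deg]) (auto simp: dd_add dd_smv deg_wt)

lemma coboundaries_eq: "coboundaries X (Suc j) = dd X ` deg X j"
  unfolding coboundaries_def by auto

lemma submod_cob: "is_submod sm (coboundaries X (Suc j))"
  unfolding coboundaries_eq
  by (rule submod_image[OF submod_deg]) (auto simp: dd_add dd_smv deg_wt)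

lemma cob_cocycles: "coboundaries X (Suc j) \<subseteq> cocycles X (Suc j)"
  unfolding coboundaries_eq cocycles_def using deg_dd ddsq by auto

lemma bideg_iff: "\<eta> \<in> bideg X p q \<longleftrightarrow> wt X \<eta> \<and> (\<forall>p' q'. (p', q') \<noteq> (p, q) \<longrightarrow> \<eta> p' q' = 0)"
  unfolding bideg_def deg_iff by auto

lemma submod_bideg: "is_submod sm (bideg X p q)"
  unfolding is_submod_def using wt_0 wt_add wt_neg wt_smv
  by (auto simp: bideg_iff) (auto simp: smv_def sm0)

lemma bideg_deg: "bideg X p q \<subseteq> deg X (p + q)" unfolding bideg_def by auto

lemma submod_Nbi: "is_submod sm (Nbi X p q)"
proof -
  have "Nbi X p q = {x \<in> {x \<in> bideg X p q. D01 X x = 0}. D21 X x = 0}" unfolding Nbi_def by auto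
  also have "is_submod sm \<dots>"
    apply (rule submod_kernel)
      apply (rule submod_kernel[OF submod_bideg])
    by (auto simp: D01_add D01_smv D21_add D21_smv bideg_iff)
  finally show ?thesis .
qed

lemma submod_Ndeg: "is_submod sm (Ndeg X q m)"
  unfolding Ndeg_def using submod_Nbi by (auto simp: is_submod_def smv_def sm0 zero_fun_def)

lemma Ndeg_wt: "x \<in> Ndeg X q m \<Longrightarrow> wt X x"
  unfolding Ndeg_def Nbi_def bideg_iff by (auto split: if_splits simp: wt_0)

lemma BN_eq: "BN X j (Suc k) = dd X ` Ndeg X j k"
  unfolding BN_def by auto

lemma submod_BN: "is_submod sm (BN X j (Suc k))"
  unfolding BN_eq
  by (rule submod_image[OF submod_Ndeg]) (auto simp: dd_add dd_smv Ndeg_wt)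

lemma proj_add: "proj q (a + b :: 'm bgel) = proj q a + proj q b" unfolding proj_def by (intro ext) simp
lemma proj_diff: "proj q (a - b :: 'm bgel) = proj q a - proj q b" unfolding proj_def by (intro ext) simp
lemma proj_smv: "proj q (smv sm r a) = smv sm r (proj q a)" unfolding proj_def smv_def by (intro ext) (simp add: sm0)
lemma proj_0: "proj q (0::'m bgel) = 0" unfolding proj_def by (intro ext) simp
lemma proj_proj: "proj q (proj q' a) = proj (max q q') a" unfolding proj_def by (intro ext) simp
lemma proj_deg: "a \<in> deg X k \<Longrightarrow> proj q a \<in> deg X k" unfolding deg_iff using wt_proj by (simp add: proj_def)

lemma submod_proj: "is_submod sm S \<Longrightarrow> is_submod sm (proj q ` S)"
  by (rule submod_image) (auto simp: proj_add proj_smv)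

lemma linmap_proj: "linmap sm (proj q) S" unfolding linmap_def by (simp add: proj_add proj_smv)

lemma proj_bideg: "a \<in> bideg X p q \<Longrightarrow> proj q' a = (if q' \<le> q then a else 0)"
  unfolding bideg_iff proj_def by (intro ext) auto

lemma proj_to_bideg:
  assumes "a \<in> deg X k" "proj q a = a" "proj (Suc q) a = 0" "q \<le> k"
  shows "a \<in> bideg X (k - q) q"
  unfolding bideg_iff
proof (intro conjI allI impI)
  show "wt X a" using assms deg_wt by blast
  fix p' q' assume h: "(p', q') \<noteq> (k - q, q)"
  have d: "\<forall>p q. p + q \<noteq> k \<longrightarrow> a p q = 0" using assms(1) deg_iff by blast
  have e1: "a p' q' = (if q \<le> q' then a p' q' else 0)" using fun_cong[OF fun_cong[OF assms(2)]] unfolding proj_def by simp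
  have e2: "(if Suc q \<le> q' then a p' q' else 0) = 0" using fun_cong[OF fun_cong[OF assms(3)], of p' q'] unfolding proj_def by simp
  show "a p' q' = 0" using d e1 e2 h assms(4) by (auto split: if_splits)
qed

end

context bgc begin

lemma bideg_zero: "\<eta> \<in> bideg X p0 q0 \<Longrightarrow> (p, q) \<noteq> (p0, q0) \<Longrightarrow> \<eta> p q = 0"
  unfolding bideg_iff by blast

lemma bideg_D01: assumes "\<eta> \<in> bideg X p0 q0"
  shows "D01 X \<eta> p q = (if p = p0 \<and> q = Suc q0 then dd X \<eta> p q else 0)"
proof (cases "p = p0 \<and> q = Suc q0")
  case True
  have a: "\<eta> (p - 2) (Suc q) = 0" using bideg_zero[OF assms] True by simp
  have b: "\<eta> (p - 1) q = 0" using bideg_zero[OF assms] True by simp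
  show ?thesis unfolding dd_apply using True a b by (simp add: D01_def d21_0 d10_0)
next
  case False
  show ?thesis
  proof (cases "1 \<le> q")
    case True
    then have "(p, q - 1) \<noteq> (p0, q0)" using False by auto
    then have "\<eta> p (q - 1) = 0" using bideg_zero[OF assms] by blast
    then show ?thesis using False True by (auto simp add: D01_def d01_0)
  qed (use False in \<open>simp add: D01_def\<close>)
qed

lemma bideg_D21: assumes "\<eta> \<in> bideg X p0 q0"
  shows "D21 X \<eta> p q = (if p = p0 + 2 \<and> Suc q = q0 then dd X \<eta> p q else 0)"
proof (cases "p = p0 + 2 \<and> Suc q = q0")
  case True
  have b: "\<eta> (p - 1) q = 0" using bideg_zero[OF assms] True by simp
  have c: "1 \<le> q \<Longrightarrow> \<eta> p (q - 1) = 0" using bideg_zero[OF assms] True by simp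
  show ?thesis unfolding dd_apply using True b c by (auto simp add: D21_def d10_0 d01_0)
next
  case False
  show ?thesis
  proof (cases "2 \<le> p")
    case True
    then have "\<eta> (p - 2) (Suc q) = 0" using bideg_zero[OF assms] False by auto
    then show ?thesis using False True by (auto simp add: D21_def d21_0)
  qed (use False in \<open>simp add: D21_def\<close>)
qed

lemma bideg_closed: assumes "\<eta> \<in> bideg X p0 q0" "dd X \<eta> = 0"
  shows "D01 X \<eta> = 0" "D21 X \<eta> = 0"
  using bideg_D01[OF assms(1)] bideg_D21[OF assms(1)] assms(2) by (auto intro!: ext)

lemma proj0: "proj 0 b = b" unfolding proj_def by simp

lemma kerproj:
  assumes "S \<subseteq> deg X k" "\<forall>b\<in>S. proj q b = b" "q \<le> k"
  shows "{b \<in> S. proj (Suc q) b = 0} = S \<inter> bideg X (k - q) q"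
proof
  show "{b \<in> S. proj (Suc q) b = 0} \<subseteq> S \<inter> bideg X (k - q) q"
    using proj_to_bideg assms by blast
  show "S \<inter> bideg X (k - q) q \<subseteq> {b \<in> S. proj (Suc q) b = 0}"
    using proj_bideg by auto
qed

lemma ZN_eq: "ZN X 0 3 = cocycles X 3 \<inter> bideg X 3 0"
proof
  show "ZN X 0 3 \<subseteq> cocycles X 3 \<inter> bideg X 3 0"
    unfolding ZN_def Ndeg_def Nbi_def cocycles_def using bideg_deg[of 3 0] by auto
  show "cocycles X 3 \<inter> bideg X 3 0 \<subseteq> ZN X 0 3"
    unfolding ZN_def Ndeg_def Nbi_def cocycles_def using bideg_closed by auto
qed

lemma rr: assumes "\<eta> \<in> deg X 3" "proj 1 (dd X \<eta>) = 0"
  shows "D21 X (comp (proj 1 \<eta>) 2 1) + D10 X (comp \<eta> 3 0) = dd X \<eta>"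
proof (intro ext)
  fix p q
  have dg: "dd X \<eta> \<in> deg X 4" using deg_dd[OF assms(1)] by simp
  have z1: "p + q \<noteq> 4 \<Longrightarrow> dd X \<eta> p q = 0" using dg deg_iff by blast
  have z2: "1 \<le> q \<Longrightarrow> dd X \<eta> p q = 0" using fun_cong[OF fun_cong[OF assms(2)], of p q]
    by (simp add: proj_def)
  show "(D21 X (comp (proj 1 \<eta>) 2 1) + D10 X (comp \<eta> 3 0)) p q = dd X \<eta> p q"
  proof (cases "p = 4 \<and> q = 0")
    case True
    then show ?thesis unfolding dd_apply by (simp add: D21_def D10_def comp_def proj_def)
  next
    case False
    then have "dd X \<eta> p q = 0" using z1 z2 by (cases q) auto
    moreover have "D21 X (comp (proj 1 \<eta>) 2 1) p q = 0"
      using False by (auto simp add: D21_def comp_def d21_0)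
    moreover have "D10 X (comp \<eta> 3 0) p q = 0"
      using False by (auto simp add: D10_def comp_def d10_0)
    ultimately show ?thesis by simp
  qed
qed

lemma BN04: "BN X 0 4 = dd X ` Nbi X 3 0"
  using BN_eq[of 0 3] by (simp add: Ndeg_def)

lemma subgrp_BN04: "subgrp (BN X 0 4)"
  using submod_subgrp[OF submod_BN[of 0 3]] by simp

lemma rho_rep_eq:
  assumes "\<xi> \<in> Aset X 3"
  obtains \<eta> where "\<eta> \<in> deg X 3" "proj 1 \<eta> = \<xi>" "proj 1 (dd X \<eta>) = 0" "rho_rep X 3 \<xi> = dd X \<eta>"
proof -
  let ?P = "\<lambda>\<eta>. \<eta> \<in> deg X 3 \<and> proj 1 \<eta> = \<xi> \<and> proj 1 (dd X \<eta>) = 0"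
  have "\<exists>\<eta>. ?P \<eta>" using assms unfolding Aset_def by auto
  then have P: "?P (SOME \<eta>. ?P \<eta>)" by (rule someI_ex)
  define \<eta> where "\<eta> = (SOME \<eta>. ?P \<eta>)"
  have P': "?P \<eta>" using P unfolding \<eta>_def .
  have "rho_rep X 3 \<xi> = D21 X (comp \<xi> 2 1) + D10 X (comp \<eta> 3 0)"
    unfolding rho_rep_def \<eta>_def by (simp add: Let_def)
  also have "\<dots> = dd X \<eta>" using rr[of \<eta>] P' by simp
  finally show ?thesis using that P' by blast
qed

lemma lift_diff:
  assumes "\<eta> \<in> deg X 3" "\<eta>' \<in> deg X 3" "proj 1 \<eta> = proj 1 \<eta>'"
    "proj 1 (dd X \<eta>) = 0" "proj 1 (dd X \<eta>') = 0"
  shows "dd X \<eta> - dd X \<eta>' \<in> BN X 0 4"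
proof -
  define \<delta> where "\<delta> = \<eta> - \<eta>'"
  have w: "wt X \<eta>" "wt X \<eta>'" using assms deg_wt by auto
  have dd\<delta>: "dd X \<delta> = dd X \<eta> - dd X \<eta>'" unfolding \<delta>_def using dd_diff w by simp
  have d3: "\<delta> \<in> deg X 3" unfolding \<delta>_def using subgrp_diff[OF submod_subgrp[OF submod_deg]] assms by blast
  have p1: "proj 1 \<delta> = 0" unfolding \<delta>_def proj_diff using assms by simp
  have bd: "\<delta> \<in> bideg X 3 0" using proj_to_bideg[OF d3 proj0[of \<delta>]] p1 by (simp add: One_nat_def)
  have pd: "proj 1 (dd X \<delta>) = 0" unfolding dd\<delta> proj_diff using assms by simp
  have "D01 X \<delta> = 0"
  proof (intro ext)
    fix p q
    have "dd X \<delta> 3 1 = 0" using fun_cong[OF fun_cong[OF pd], of 3 1] by (simp add: proj_def)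
    then show "D01 X \<delta> p q = 0 p q" using bideg_D01[OF bd, of p q] by auto
  qed
  moreover have "D21 X \<delta> = 0" using bideg_D21[OF bd] by (auto intro!: ext)
  ultimately have "\<delta> \<in> Nbi X 3 0" using bd unfolding Nbi_def by simp
  then show ?thesis unfolding BN04 dd\<delta>[symmetric] by blast
qed

lemma K1: "ker_rho X 3 = proj 1 ` cocycles X 3"
proof
  show "ker_rho X 3 \<subseteq> proj 1 ` cocycles X 3"
  proof
    fix \<xi> assume h: "\<xi> \<in> ker_rho X 3"
    then have A: "\<xi> \<in> Aset X 3" and r: "rho X 3 \<xi> = BN X 0 4" unfolding ker_rho_def by auto
    obtain \<eta> where e: "\<eta> \<in> deg X 3" "proj 1 \<eta> = \<xi>" "proj 1 (dd X \<eta>) = 0" "rho_rep X 3 \<xi> = dd X \<eta>"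
      using rho_rep_eq[OF A] by blast
    have "dd X \<eta> \<in> BN X 0 4" using r e(4) coset_self[OF subgrp_BN04] unfolding rho_def by simp
    then obtain \<zeta> where z: "\<zeta> \<in> Nbi X 3 0" "dd X \<eta> = dd X \<zeta>" unfolding BN04 by blast
    have zb: "\<zeta> \<in> bideg X 3 0" using z unfolding Nbi_def by simp
    then have zd: "\<zeta> \<in> deg X 3" using bideg_deg[of 3 0] by auto
    define c where "c = \<eta> - \<zeta>"
    have "c \<in> deg X 3" unfolding c_def using subgrp_diff[OF submod_subgrp[OF submod_deg]] e zd by blast
    moreover have "dd X c = 0" unfolding c_def using dd_diff deg_wt e zd z by simp
    ultimately have "c \<in> cocycles X 3" unfolding cocycles_def by simp
    moreover have "proj 1 c = \<xi>" unfolding c_def proj_diff using e proj_bideg[OF zb] by simp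
    ultimately show "\<xi> \<in> proj 1 ` cocycles X 3" by blast
  qed
  show "proj 1 ` cocycles X 3 \<subseteq> ker_rho X 3"
  proof
    fix \<xi> assume "\<xi> \<in> proj 1 ` cocycles X 3"
    then obtain c where c: "c \<in> deg X 3" "dd X c = 0" "\<xi> = proj 1 c" unfolding cocycles_def by auto
    have A: "\<xi> \<in> Aset X 3" unfolding Aset_def using c proj_0 by auto
    obtain \<eta> where e: "\<eta> \<in> deg X 3" "proj 1 \<eta> = \<xi>" "proj 1 (dd X \<eta>) = 0" "rho_rep X 3 \<xi> = dd X \<eta>"
      using rho_rep_eq[OF A] by blast
    have "dd X \<eta> - dd X c \<in> BN X 0 4" using lift_diff[of \<eta> c] e c proj_0 by simp
    then have "rho_rep X 3 \<xi> \<in> BN X 0 4" using e c by simp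
    then show "\<xi> \<in> ker_rho X 3" unfolding ker_rho_def rho_def using A coset_self[OF subgrp_BN04] by simp
  qed
qed

end

context bgc begin

lemma cob3: "coboundaries X 3 = dd X ` deg X 2"
  using coboundaries_eq[of 2] by (simp add: numeral_3_eq_3)

lemma deg_dd3: "\<eta> \<in> deg X 3 \<Longrightarrow> dd X \<eta> \<in> deg X 4" using deg_dd[of \<eta> 3] by (simp add: numeral_eq_Suc)
lemma gen2: "x = a + b \<Longrightarrow> x - a - b = (0::'a::ab_group_add)" by simp
lemma gen3: "x = a + b + c \<Longrightarrow> x - a - b - c = (0::'a::ab_group_add)" by simp

lemma Mset_fix:
  assumes "\<eta> \<in> Mset X 3" "j \<le> 3"
  obtains \<alpha> where "\<alpha> \<in> bideg X (3 - j) j" "dd X \<alpha> = comp (dd X \<eta>) (4 - j) j"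
proof -
  have "comp (dd X \<eta>) (4 - j) j \<in> BN X j (Suc 3)" using assms unfolding Mset_def by auto
  then obtain \<alpha> where "\<alpha> \<in> Ndeg X j 3" "dd X \<alpha> = comp (dd X \<eta>) (4 - j) j"
    unfolding BN_eq by auto
  then show ?thesis using that assms(2) unfolding Ndeg_def Nbi_def by auto
qed

lemma bideg_wt: "\<alpha> \<in> bideg X p q \<Longrightarrow> wt X \<alpha>" unfolding bideg_iff by blast
lemma bideg_deg': "\<alpha> \<in> bideg X p q \<Longrightarrow> p + q = k \<Longrightarrow> \<alpha> \<in> deg X k" using bideg_deg by blast

lemma deg_diff: "a \<in> deg X k \<Longrightarrow> b \<in> deg X k \<Longrightarrow> a - b \<in> deg X k"
  using subgrp_diff[OF submod_subgrp[OF submod_deg]] by blast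

lemma cocycle_Mset: assumes "c \<in> cocycles X 3" shows "c \<in> Mset X 3"
proof -
  have "0 \<in> BN X j (Suc 3)" for j using submod_BN[of j 3] unfolding is_submod_def by blast
  moreover have "comp 0 i j = (0::'m bgel)" for i j unfolding comp_def by (intro ext) simp
  ultimately show ?thesis using assms unfolding Mset_def cocycles_def by simp
qed

lemma split3: assumes "x \<in> deg X 4" "proj 3 x = 0"
  shows "x = comp x 4 0 + comp x 3 1 + comp x 2 2"
proof (intro ext)
  fix p q
  have z1: "p + q \<noteq> 4 \<Longrightarrow> x p q = 0" using assms(1) deg_iff by blast
  have z2: "3 \<le> q \<Longrightarrow> x p q = 0" using fun_cong[OF fun_cong[OF assms(2)], of p q]
    by (simp add: proj_def)
  show "x p q = (comp x 4 0 + comp x 3 1 + comp x 2 2) p q"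
    unfolding comp_def using z1 z2 by (cases "q \<le> 2") auto
qed

lemma split2: assumes "x \<in> deg X 4" "proj 2 x = 0"
  shows "x = comp x 4 0 + comp x 3 1"
proof (intro ext)
  fix p q
  have z1: "p + q \<noteq> 4 \<Longrightarrow> x p q = 0" using assms(1) deg_iff by blast
  have z2: "2 \<le> q \<Longrightarrow> x p q = 0" using fun_cong[OF fun_cong[OF assms(2)], of p q]
    by (simp add: proj_def)
  show "x p q = (comp x 4 0 + comp x 3 1) p q"
    unfolding comp_def using z1 z2 by (cases "q \<le> 1") auto
qed

lemma K3: "Zcal X 3 2 = proj 2 ` cocycles X 3"
proof
  show "Zcal X 3 2 \<subseteq> proj 2 ` cocycles X 3"
  proof
    fix z assume "z \<in> Zcal X 3 2"
    then obtain \<eta> where e: "\<eta> \<in> Mset X 3" "proj 2 (dd X \<eta>) = 0" "z = proj 2 \<eta>"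
      unfolding Zcal_def by auto
    have ed: "\<eta> \<in> deg X 3" using e unfolding Mset_def by auto
    obtain a0 where a0: "a0 \<in> bideg X 3 0" "dd X a0 = comp (dd X \<eta>) 4 0"
      using Mset_fix[OF e(1), of 0] by auto
    obtain a1 where a1: "a1 \<in> bideg X 2 1" "dd X a1 = comp (dd X \<eta>) 3 1"
      using Mset_fix[OF e(1), of 1] by auto
    define c where "c = \<eta> - a0 - a1"
    have d0: "a0 \<in> deg X 3" "a1 \<in> deg X 3" using a0 a1 bideg_deg' by auto
    have cd: "c \<in> deg X 3" unfolding c_def using deg_diff d0 ed by blast
    have "dd X c = dd X \<eta> - comp (dd X \<eta>) 4 0 - comp (dd X \<eta>) 3 1"
      unfolding c_def using a0 a1 d0 ed deg_wt wt_diff dd_diff by simp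
    also have "\<dots> = 0" by (rule gen2[OF split2[OF deg_dd3[OF ed] e(2)]])
    finally have "c \<in> cocycles X 3" using cd unfolding cocycles_def by simp
    moreover have "proj 2 c = z" unfolding c_def proj_diff e(3)
      using proj_bideg[OF a0(1)] proj_bideg[OF a1(1)] by simp
    ultimately show "z \<in> proj 2 ` cocycles X 3" by blast
  qed
  show "proj 2 ` cocycles X 3 \<subseteq> Zcal X 3 2"
    unfolding Zcal_def using cocycle_Mset proj_0 unfolding cocycles_def by auto
qed

lemma K4: "Zcal X 3 3 = proj 3 ` cocycles X 3"
proof
  show "Zcal X 3 3 \<subseteq> proj 3 ` cocycles X 3"
  proof
    fix z assume "z \<in> Zcal X 3 3"
    then obtain \<eta> where e: "\<eta> \<in> Mset X 3" "proj 3 (dd X \<eta>) = 0" "z = proj 3 \<eta>"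
      unfolding Zcal_def by auto
    have ed: "\<eta> \<in> deg X 3" using e unfolding Mset_def by auto
    obtain a0 where a0: "a0 \<in> bideg X 3 0" "dd X a0 = comp (dd X \<eta>) 4 0"
      using Mset_fix[OF e(1), of 0] by auto
    obtain a1 where a1: "a1 \<in> bideg X 2 1" "dd X a1 = comp (dd X \<eta>) 3 1"
      using Mset_fix[OF e(1), of 1] by auto
    obtain a2 where a2: "a2 \<in> bideg X 1 2" "dd X a2 = comp (dd X \<eta>) 2 2"
      using Mset_fix[OF e(1), of 2] by auto
    define c where "c = \<eta> - a0 - a1 - a2"
    have d0: "a0 \<in> deg X 3" "a1 \<in> deg X 3" "a2 \<in> deg X 3" using a0 a1 a2 bideg_deg' by auto
    have cd: "c \<in> deg X 3" unfolding c_def using deg_diff d0 ed by blast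
    have "dd X c = dd X \<eta> - comp (dd X \<eta>) 4 0 - comp (dd X \<eta>) 3 1 - comp (dd X \<eta>) 2 2"
      unfolding c_def using a0 a1 a2 d0 ed deg_wt wt_diff dd_diff by simp
    also have "\<dots> = 0" by (rule gen3[OF split3[OF deg_dd3[OF ed] e(2)]])
    finally have "c \<in> cocycles X 3" using cd unfolding cocycles_def by simp
    moreover have "proj 3 c = z" unfolding c_def proj_diff e(3)
      using proj_bideg[OF a0(1)] proj_bideg[OF a1(1)] proj_bideg[OF a2(1)] by simp
    ultimately show "z \<in> proj 3 ` cocycles X 3" by blast
  qed
  show "proj 3 ` cocycles X 3 \<subseteq> Zcal X 3 3"
    unfolding Zcal_def using cocycle_Mset proj_0 unfolding cocycles_def by auto
qed

lemma pd3: assumes "\<zeta> \<in> deg X 2" shows "proj 3 (dd X \<zeta>) = D01 X (comp \<zeta> 0 2)"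
proof (intro ext)
  fix p q
  have z: "\<And>a b. a + b \<noteq> 2 \<Longrightarrow> \<zeta> a b = 0" using assms deg_iff by blast
  show "proj 3 (dd X \<zeta>) p q = D01 X (comp \<zeta> 0 2) p q"
  proof (cases "3 \<le> q")
    case True
    have A: "(if 2 \<le> p then d21 X (p - 2) (Suc q) (\<zeta> (p - 2) (Suc q)) else 0) = 0"
      using z[of "p - 2" "Suc q"] True d21_0 by auto
    have B: "(if 1 \<le> p then d10 X (p - 1) q (\<zeta> (p - 1) q) else 0) = 0"
      using z[of "p - 1" q] True d10_0 by auto
    have C: "comp \<zeta> 0 2 p (q - 1) = \<zeta> p (q - 1)"
      unfolding comp_def using z[of p "q - 1"] True by auto
    show ?thesis using True unfolding proj_def dd_apply A B D01_def C by simp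
  next
    case False
    have "comp \<zeta> 0 2 p (q - 1) = 0" unfolding comp_def using False by auto
    then show ?thesis using False unfolding proj_def D01_def by (simp add: d01_0)
  qed
qed

lemma comp_bideg: "\<eta> \<in> bideg X p q \<Longrightarrow> comp \<eta> p q = \<eta>"
  unfolding bideg_iff comp_def by (intro ext) auto

lemma comp_in_bideg: "wt X \<eta> \<Longrightarrow> comp \<eta> p q \<in> bideg X p q"
  unfolding bideg_iff using wt_comp by (auto simp: comp_def)

lemma B0col_eq: "B0col X 3 = proj 3 ` coboundaries X 3"
proof
  show "B0col X 3 \<subseteq> proj 3 ` coboundaries X 3"
  proof
    fix x assume "x \<in> B0col X 3"
    then obtain \<eta> where e: "\<eta> \<in> bideg X 0 2" "x = D01 X \<eta>" unfolding B0col_def by auto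
    have "\<eta> \<in> deg X 2" using e bideg_deg' by auto
    moreover have "proj 3 (dd X \<eta>) = x" using pd3[OF calculation] comp_bideg[OF e(1)] e by simp
    ultimately show "x \<in> proj 3 ` coboundaries X 3" unfolding cob3 by blast
  qed
  show "proj 3 ` coboundaries X 3 \<subseteq> B0col X 3"
  proof
    fix x assume "x \<in> proj 3 ` coboundaries X 3"
    then obtain \<zeta> where z: "\<zeta> \<in> deg X 2" "x = proj 3 (dd X \<zeta>)" unfolding cob3 by auto
    have "comp \<zeta> 0 2 \<in> bideg X 0 2" using comp_in_bideg deg_wt z by blast
    then show "x \<in> B0col X 3" unfolding B0col_def using pd3[OF z(1)] z by auto
  qed
qed

lemma gd:
  assumes B: "is_submod sm B" and C: "is_submod sm C" and BC: "B \<subseteq> C" and Cd: "C \<subseteq> deg X k"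
    and qk: "q \<le> k"
  shows "diagram sm (proj q ` B \<inter> bideg X (k - q) q) (proj q ` B) (proj (Suc q) ` B)
    (proj q ` C \<inter> bideg X (k - q) q) (proj q ` C) (proj (Suc q) ` C) id (proj (Suc q))"
proof (rule diagram_intro)
  show "is_submod sm (proj q ` B \<inter> bideg X (k - q) q)" "is_submod sm (proj q ` B)"
    "is_submod sm (proj (Suc q) ` B)" "is_submod sm (proj q ` C \<inter> bideg X (k - q) q)"
    "is_submod sm (proj q ` C)" "is_submod sm (proj (Suc q) ` C)"
    using submod_Int submod_proj submod_bideg B C by blast+
  show "proj q ` B \<inter> bideg X (k - q) q \<subseteq> proj q ` C \<inter> bideg X (k - q) q"
    "proj q ` B \<subseteq> proj q ` C" "proj (Suc q) ` B \<subseteq> proj (Suc q) ` C"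
    "proj q ` C \<inter> bideg X (k - q) q \<subseteq> proj q ` C" using BC by auto
  show "linmap sm (proj (Suc q)) (proj q ` C)" by (rule linmap_proj)
  show "proj (Suc q) ` proj q ` C = proj (Suc q) ` C"
    "proj (Suc q) ` proj q ` B = proj (Suc q) ` B"
    by (simp_all add: image_image proj_proj max_def)
  have pp: "\<forall>b\<in>proj q ` S. proj q b = b" for S by (auto simp: proj_proj)
  show "{b \<in> proj q ` C. proj (Suc q) b = 0} = proj q ` C \<inter> bideg X (k - q) q"
    by (rule kerproj[OF _ pp qk]) (use Cd proj_deg in auto)
  show "{b \<in> proj q ` B. proj (Suc q) b = 0} = proj q ` B \<inter> bideg X (k - q) q"
    by (rule kerproj[OF _ pp qk]) (use Cd BC proj_deg in auto)
qed

lemma proj0_id: "proj 0 = id" unfolding proj_def by (intro ext) simp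

lemma submod_cob3: "is_submod sm (coboundaries X 3)"
  unfolding cob3 by (rule submod_image[OF submod_deg]) (auto simp: dd_add dd_smv deg_wt)

lemma BC3: "coboundaries X 3 \<subseteq> cocycles X 3"
  unfolding cob3 cocycles_def using deg_dd ddsq by (auto simp: numeral_eq_Suc)

lemma Cd3: "cocycles X 3 \<subseteq> deg X 3" unfolding cocycles_def by auto

lemma K2: "ker_varrho X 3 = proj 1 ` cocycles X 3 \<inter> bideg X 2 1"
  unfolding K1[symmetric] ker_varrho_def ker_rho_def Jset_def by auto

lemma main:
  shows "diagram sm (coboundaries X 3 \<inter> bideg X 3 0) (coboundaries X 3) (Bcal X 3 1)
                    (ZN X 0 3) (cocycles X 3) (ker_rho X 3) id (proj 1)
       \<and> diagram sm (Bcal X 3 1 \<inter> bideg X 2 1) (Bcal X 3 1) (Bcal X 3 2)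
                    (ker_varrho X 3) (ker_rho X 3) (Zcal X 3 2) id (proj 2)
       \<and> diagram sm (Bcal X 3 2 \<inter> bideg X 1 2) (Bcal X 3 2) (B0col X 3)
                    (Zcal X 3 2 \<inter> bideg X 1 2) (Zcal X 3 2) (Zcal X 3 3) id (proj 3)"
proof -
  note g = gd[OF submod_cob3 submod_cocycles BC3 Cd3]
  have g0: "diagram sm (coboundaries X 3 \<inter> bideg X 3 0) (coboundaries X 3) (proj 1 ` coboundaries X 3)
     (cocycles X 3 \<inter> bideg X 3 0) (cocycles X 3) (proj 1 ` cocycles X 3) id (proj 1)"
    using g[of 0] by (simp add: proj0_id)
  have g1: "diagram sm (proj 1 ` coboundaries X 3 \<inter> bideg X 2 1) (proj 1 ` coboundaries X 3) (proj 2 ` coboundaries X 3)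
     (proj 1 ` cocycles X 3 \<inter> bideg X 2 1) (proj 1 ` cocycles X 3) (proj 2 ` cocycles X 3) id (proj 2)"
    using g[of 1] by (simp add: numeral_eq_Suc)
  have g2: "diagram sm (proj 2 ` coboundaries X 3 \<inter> bideg X 1 2) (proj 2 ` coboundaries X 3) (proj 3 ` coboundaries X 3)
     (proj 2 ` cocycles X 3 \<inter> bideg X 1 2) (proj 2 ` cocycles X 3) (proj 3 ` cocycles X 3) id (proj 3)"
    using g[of 2] by (simp add: numeral_eq_Suc)
  show ?thesis unfolding Bcal_def ZN_eq K1 K2 K3 K4 B0col_eq using g0 g1 g2 by blast
qed

end

theorem theorem5p7:
  fixes sm :: "'r::ring_1 \<Rightarrow> 'm::ab_group_add \<Rightarrow> 'm" and X :: "'m bgcx"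
  assumes "bigraded_complex sm X"
  shows "diagram sm (coboundaries X 3 \<inter> bideg X 3 0) (coboundaries X 3) (Bcal X 3 1)
                    (ZN X 0 3) (cocycles X 3) (ker_rho X 3) id (proj 1)
       \<and> diagram sm (Bcal X 3 1 \<inter> bideg X 2 1) (Bcal X 3 1) (Bcal X 3 2)
                    (ker_varrho X 3) (ker_rho X 3) (Zcal X 3 2) id (proj 2)
       \<and> diagram sm (Bcal X 3 2 \<inter> bideg X 1 2) (Bcal X 3 2) (B0col X 3)
                    (Zcal X 3 2 \<inter> bideg X 1 2) (Zcal X 3 2) (Zcal X 3 3) id (proj 3)"
  using bgc.main[OF bgc.intro[OF assms]] .

end
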